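(* Let $\Sigma 2$ be the Sierpiński space and $\Sigma\mathbb{N}$ the natural numbers with the Scott topology of the usual order (which is $S^{\ast}$-well-filtered). Then the function space $[\Sigma 2,\Sigma\mathbb{N}]$ with the Isbell topology is not weak well-filtered, hence not $S^{\ast}$-well-filtered. Thus $Y$ being $S^{\ast}$-well-filtered does not imply that $[X,Y]$ is $S^{\ast}$-well-filtered for nonempty $T_0$-spaces $X$.
   Context: $\Sigma 2$ is the two-element chain $0<1$ with its Scott topology (open sets $\emptyset,\{1\},\{0,1\}$). $[X,Y]$ denotes the set of continuous maps $X\to Y$ with the Isbell topology, generated by the subbasic sets $N(H\leftarrow V)=\{f\mid f^{-1}(V)\in H\}$ where $H$ is a Scott open subset of the complete lattice $\mathcal{O}(X)$ of open sets of $X$ and $V$ is open in $Y$. For a space $Z$, ${\uparrow}$ is taken in the specialization order ($x\le y$ iff $x\in cl\{y\}$); $K(Z)$ is the set of nonempty compact saturated (= upper) subsets; a family in $K(Z)$ is filtered if any two members contain a common member. $Z$ is weak well-filtered if for every filtered $\{K_i\}\subseteq K(Z)$ and nonempty open $U$, $\bigcap_i K_i\subseteq U$ implies $K_i\subseteq U$ for some $i$; $Z$ is $S^{\ast}$-well-filtered if for every filtered $\{K_i\}\subseteq K(Z)$, $G\in K(Z)$ and nonempty open $U$, $\bigcap_i K_i\cap G\subseteq U$ implies $K_i\cap G\subseteq U$ for some $i$. *)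

theory Defs
  imports "HOL-Analysis.Analysis"
begin

definition directed_set :: "'a::order set \<Rightarrow> bool" where
  "directed_set D \<longleftrightarrow> D \<noteq> {} \<and> (\<forall>a\<in>D. \<forall>b\<in>D. \<exists>c\<in>D. a \<le> c \<and> b \<le> c)"

definition is_lub :: "'a::order set \<Rightarrow> 'a \<Rightarrow> bool" where
  "is_lub D s \<longleftrightarrow> (\<forall>d\<in>D. d \<le> s) \<and> (\<forall>u. (\<forall>d\<in>D. d \<le> u) \<longrightarrow> s \<le> u)"

definition scott_open :: "'a::order set \<Rightarrow> bool" where
  "scott_open U \<longleftrightarrow> (\<forall>x\<in>U. \<forall>y. x \<le> y \<longrightarrow> y \<in> U) \<and>
     (\<forall>D s. directed_set D \<and> is_lub D s \<and> s \<in> U \<longrightarrow> D \<inter> U \<noteq> {})"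

lemma scott_open_Int:
  assumes hS: "scott_open S" and hT: "scott_open T"
  shows "scott_open (S \<inter> T)"
  unfolding scott_open_def
proof (intro conjI allI impI ballI)
  fix x y assume "x \<in> S \<inter> T" "x \<le> y"
  then show "y \<in> S \<inter> T" using hS hT unfolding scott_open_def by auto
next
  fix D s assume d: "directed_set D \<and> is_lub D s \<and> s \<in> S \<inter> T"
  have "D \<inter> S \<noteq> {}" using hS d unfolding scott_open_def by blast
  then obtain a where a: "a \<in> D" "a \<in> S" by blast
  have "D \<inter> T \<noteq> {}" using hT d unfolding scott_open_def by blast
  then obtain b where b: "b \<in> D" "b \<in> T" by blast
  obtain c where c: "c \<in> D" "a \<le> c" "b \<le> c" using d a b unfolding directed_set_def by auto
  have "c \<in> S" using hS a c unfolding scott_open_def by auto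
  moreover have "c \<in> T" using hT b c unfolding scott_open_def by auto
  ultimately show "D \<inter> (S \<inter> T) \<noteq> {}" using c by auto
qed

lemma scott_open_Union:
  assumes h: "\<And>S. S \<in> K \<Longrightarrow> scott_open S"
  shows "scott_open (\<Union>K)"
  unfolding scott_open_def
proof (intro conjI allI impI ballI)
  fix x y assume "x \<in> \<Union>K" "x \<le> y"
  then obtain S where "S \<in> K" "x \<in> S" by auto
  then have "y \<in> S" using h[of S] \<open>x \<le> y\<close> unfolding scott_open_def by auto
  then show "y \<in> \<Union>K" using \<open>S \<in> K\<close> by auto
next
  fix D s assume d: "directed_set D \<and> is_lub D s \<and> s \<in> \<Union>K"
  then obtain S where S: "S \<in> K" "s \<in> S" by auto
  then have "D \<inter> S \<noteq> {}" using h[of S] d unfolding scott_open_def by blast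
  then show "D \<inter> \<Union>K \<noteq> {}" using S by auto
qed

lemma istopology_scott_open: "istopology scott_open"
  unfolding istopology_def using scott_open_Int scott_open_Union by blast

definition scott_topology :: "'a::order topology" where
  "scott_topology = topology scott_open"

definition spec_le :: "'a topology \<Rightarrow> 'a \<Rightarrow> 'a \<Rightarrow> bool" where
  "spec_le Z x y \<longleftrightarrow> x \<in> topspace Z \<and> y \<in> topspace Z \<and> x \<in> Z closure_of {y}"

definition saturated_in :: "'a topology \<Rightarrow> 'a set \<Rightarrow> bool" where
  "saturated_in Z A \<longleftrightarrow> A \<subseteq> topspace Z \<and> (\<forall>x\<in>A. \<forall>y. spec_le Z x y \<longrightarrow> y \<in> A)"

definition Kset :: "'a topology \<Rightarrow> 'a set set" where
  "Kset Z = {K. K \<noteq> {} \<and> compactin Z K \<and> saturated_in Z K}"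

definition filtered_K :: "'a topology \<Rightarrow> 'a set set \<Rightarrow> bool" where
  "filtered_K Z \<K> \<longleftrightarrow> \<K> \<noteq> {} \<and> \<K> \<subseteq> Kset Z \<and>
     (\<forall>K1\<in>\<K>. \<forall>K2\<in>\<K>. \<exists>K3\<in>\<K>. K3 \<subseteq> K1 \<and> K3 \<subseteq> K2)"

definition weak_well_filtered :: "'a topology \<Rightarrow> bool" where
  "weak_well_filtered Z \<longleftrightarrow>
     (\<forall>\<K> U. filtered_K Z \<K> \<and> openin Z U \<and> U \<noteq> {} \<and> \<Inter>\<K> \<subseteq> U \<longrightarrow> (\<exists>K\<in>\<K>. K \<subseteq> U))"

definition S_star_well_filtered :: "'a topology \<Rightarrow> bool" where
  "S_star_well_filtered Z \<longleftrightarrow>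
     (\<forall>\<K> G U. filtered_K Z \<K> \<and> G \<in> Kset Z \<and> openin Z U \<and> U \<noteq> {} \<and> \<Inter>\<K> \<inter> G \<subseteq> U
        \<longrightarrow> (\<exists>K\<in>\<K>. K \<inter> G \<subseteq> U))"

text \<open>Continuous maps X \<rightarrow> Y, represented extensionally (value undefined outside topspace X).\<close>
definition cmaps :: "'a topology \<Rightarrow> 'b topology \<Rightarrow> ('a \<Rightarrow> 'b) set" where
  "cmaps X Y = {f. continuous_map X Y f \<and> (\<forall>x. x \<notin> topspace X \<longrightarrow> f x = undefined)}"

text \<open>Scott open subsets of the complete lattice O(X) (ordered by inclusion, joins are unions).\<close>
definition scott_open_OX :: "'a topology \<Rightarrow> 'a set set \<Rightarrow> bool" where
  "scott_open_OX X H \<longleftrightarrow> H \<subseteq> {U. openin X U} \<and>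
     (\<forall>U\<in>H. \<forall>V. openin X V \<and> U \<subseteq> V \<longrightarrow> V \<in> H) \<and>
     (\<forall>\<D>. \<D> \<noteq> {} \<and> (\<forall>U\<in>\<D>. openin X U) \<and> (\<forall>U\<in>\<D>. \<forall>V\<in>\<D>. \<exists>W\<in>\<D>. U \<subseteq> W \<and> V \<subseteq> W)
          \<and> \<Union>\<D> \<in> H \<longrightarrow> (\<exists>U\<in>\<D>. U \<in> H))"

definition isbell_subbasic :: "'a topology \<Rightarrow> 'b topology \<Rightarrow> 'a set set \<Rightarrow> 'b set \<Rightarrow> ('a \<Rightarrow> 'b) set" where
  "isbell_subbasic X Y H V = {f \<in> cmaps X Y. {x \<in> topspace X. f x \<in> V} \<in> H}"

definition isbell_topology :: "'a topology \<Rightarrow> 'b topology \<Rightarrow> ('a \<Rightarrow> 'b) topology" where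
  "isbell_topology X Y = topology_generated_by
     {isbell_subbasic X Y H V | H V. scott_open_OX X H \<and> openin Y V}"

end

theory Submission
  imports Defs
begin

lemma lub_mem_lin:
  fixes D :: "'a::linorder set"
  assumes "is_lub D s" "finite D" "D \<noteq> {}"
  shows "s \<in> D"
proof -
  have m: "Max D \<in> D" using assms by simp
  have "\<forall>d\<in>D. d \<le> Max D" using assms by simp
  then have "s \<le> Max D" using assms(1) unfolding is_lub_def by blast
  moreover have "Max D \<le> s" using assms(1) m unfolding is_lub_def by blast
  ultimately show ?thesis using m by simp
qed

lemma scott_open_nat: "scott_open (U::nat set) \<longleftrightarrow> (\<forall>x\<in>U. \<forall>y. x \<le> y \<longrightarrow> y \<in> U)"
proof
  assume "scott_open U" then show "\<forall>x\<in>U. \<forall>y. x \<le> y \<longrightarrow> y \<in> U" unfolding scott_open_def by blast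
next
  assume up: "\<forall>x\<in>U. \<forall>y. x \<le> y \<longrightarrow> y \<in> U"
  show "scott_open U" unfolding scott_open_def
  proof (intro conjI allI impI)
    show "\<forall>x\<in>U. \<forall>y. x \<le> y \<longrightarrow> y \<in> U" by fact
    fix D s assume h: "directed_set D \<and> is_lub D s \<and> s \<in> U"
    have "D \<subseteq> {..s}" using h unfolding is_lub_def by auto
    then have "finite D" using finite_subset by blast
    moreover have "D \<noteq> {}" using h unfolding directed_set_def by auto
    ultimately have "s \<in> D" using lub_mem_lin h by blast
    then show "D \<inter> U \<noteq> {}" using h by blast
  qed
qed

lemma openin_scott: "openin scott_topology = scott_open"
  unfolding scott_topology_def by (rule topology_inverse'[OF istopology_scott_open])

lemma topspace_scott: "topspace (scott_topology :: 'a::order topology) = UNIV"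
proof -
  have "scott_open (UNIV :: 'a set)" unfolding scott_open_def directed_set_def by auto
  then show ?thesis unfolding topspace_def openin_scott by auto
qed

lemma openin_scott_nat: "openin (scott_topology::nat topology) U \<longleftrightarrow> (\<forall>x\<in>U. \<forall>y. x \<le> y \<longrightarrow> y \<in> U)"
  using openin_scott scott_open_nat by metis

lemma spec_le_nat: "spec_le (scott_topology::nat topology) x y \<Longrightarrow> x \<le> y"
proof -
  assume "spec_le scott_topology x y"
  then have "x \<in> scott_topology closure_of {y}" unfolding spec_le_def by blast
  moreover have "openin (scott_topology::nat topology) {z. x \<le> z}"
    unfolding openin_scott_nat by auto
  ultimately show "x \<le> y" unfolding in_closure_of by blast
qed

lemma nat_S_star: "S_star_well_filtered (scott_topology :: nat topology)"
  unfolding S_star_well_filtered_def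
proof (intro allI impI)
  fix \<K> G U
  assume h: "filtered_K (scott_topology::nat topology) \<K> \<and> G \<in> Kset scott_topology \<and>
    openin scott_topology U \<and> U \<noteq> {} \<and> \<Inter>\<K> \<inter> G \<subseteq> U"
  have up: "\<And>K x y. K \<in> \<K> \<Longrightarrow> x \<in> K \<Longrightarrow> x \<le> y \<Longrightarrow> y \<in> K"
  proof -
    fix K x y assume a: "K \<in> \<K>" "x \<in> K" "x \<le> y"
    then have "K \<in> Kset scott_topology" using h unfolding filtered_K_def by blast
    then have "saturated_in scott_topology K" unfolding Kset_def by blast
    moreover have "spec_le (scott_topology::nat topology) x y"
      unfolding spec_le_def topspace_scott in_closure_of
      using a(3) by (auto simp: openin_scott_nat)
    ultimately show "y \<in> K" using a unfolding saturated_in_def by blast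
  qed
  have ne: "\<And>K. K \<in> \<K> \<Longrightarrow> K \<noteq> {}" using h unfolding filtered_K_def Kset_def by blast
  obtain u where u: "u \<in> U" using h by blast
  have Uup: "\<And>y. u \<le> y \<Longrightarrow> y \<in> U" using h u openin_scott_nat by blast
  show "\<exists>K\<in>\<K>. K \<inter> G \<subseteq> U"
  proof (cases "\<exists>K\<in>\<K>. u \<le> Least (\<lambda>z. z \<in> K)")
    case True
    then obtain K where K: "K \<in> \<K>" "u \<le> Least (\<lambda>z. z \<in> K)" by blast
    have "K \<subseteq> U"
    proof
      fix y assume "y \<in> K"
      then have "Least (\<lambda>z. z \<in> K) \<le> y" by (rule Least_le)
      then show "y \<in> U" using K(2) Uup le_trans by blast
    qed
    then show ?thesis using K by blast
  next
    case False
    define L where "L = (\<lambda>K. Least (\<lambda>z. z \<in> K)) ` \<K>"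
    have "L \<subseteq> {..<u}" using False unfolding L_def by auto
    then have fin: "finite L" using finite_subset by blast
    have "L \<noteq> {}" using h unfolding L_def filtered_K_def by auto
    then have "Max L \<in> L" using fin by simp
    then obtain K0 where K0: "K0 \<in> \<K>" "Least (\<lambda>z. z \<in> K0) = Max L" unfolding L_def by auto
    have "K0 \<subseteq> \<Inter>\<K>"
    proof
      fix x assume x: "x \<in> K0"
      show "x \<in> \<Inter>\<K>"
      proof
        fix K assume K: "K \<in> \<K>"
        then obtain K3 where K3: "K3 \<in> \<K>" "K3 \<subseteq> K0" "K3 \<subseteq> K"
          using h K0(1) unfolding filtered_K_def by meson
        have a1: "Least (\<lambda>z. z \<in> K3) \<le> Max L" using fin K3(1) unfolding L_def by auto
        obtain w where "w \<in> K3" using ne[OF K3(1)] by blast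
        then have l3: "Least (\<lambda>z. z \<in> K3) \<in> K3" by (rule LeastI)
        then have "Least (\<lambda>z. z \<in> K3) \<in> K0" using K3(2) by blast
        then have a2: "Least (\<lambda>z. z \<in> K0) \<le> Least (\<lambda>z. z \<in> K3)" by (rule Least_le)
        have "Least (\<lambda>z. z \<in> K0) \<le> x" using x by (rule Least_le)
        then have "Least (\<lambda>z. z \<in> K3) \<le> x" using a1 a2 K0(2) by linarith
        then have "x \<in> K3" using up[OF K3(1) l3] by blast
        then show "x \<in> K" using K3 by blast
      qed
    qed
    then have "K0 \<inter> G \<subseteq> U" using h by blast
    then show ?thesis using K0 by blast
  qed
qed

abbreviation "SX \<equiv> (scott_topology :: bool topology)"
abbreviation "SY \<equiv> (scott_topology :: nat topology)"

definition Hb :: "bool \<Rightarrow> bool set set" where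
  "Hb b = {U. openin SX U \<and> b \<in> U}"

lemma Hb_scott: "scott_open_OX SX (Hb b)"
  unfolding scott_open_OX_def Hb_def by blast

lemma cmaps_eq: "cmaps SX SY = {f. continuous_map SX SY f}"
  unfolding cmaps_def topspace_scott by simp

lemma subbasic_Hb:
  assumes "openin SY V"
  shows "isbell_subbasic SX SY (Hb b) V = {f \<in> cmaps SX SY. f b \<in> V}"
proof -
  have "\<And>f. f \<in> cmaps SX SY \<Longrightarrow> openin SX {x \<in> topspace SX. f x \<in> V}"
    using assms openin_continuous_map_preimage unfolding cmaps_eq by blast
  then show ?thesis unfolding isbell_subbasic_def Hb_def topspace_scott by auto
qed

lemma isbell_open_up:
  assumes "openin (isbell_topology SX SY) Ob"
  shows "\<forall>f\<in>Ob. \<forall>g\<in>cmaps SX SY. f \<le> g \<longrightarrow> g \<in> Ob"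
proof -
  have "generate_topology_on {isbell_subbasic SX SY H V | H V. scott_open_OX SX H \<and> openin SY V} Ob"
    using assms unfolding isbell_topology_def openin_topology_generated_by_iff .
  then show ?thesis
  proof (induction rule: generate_topology_on.induct)
    case Empty then show ?case by simp
  next
    case (Int a b) then show ?case by blast
  next
    case (UN K) then show ?case by blast
  next
    case (Basis s)
    then obtain H V where s: "s = isbell_subbasic SX SY H V" "scott_open_OX SX H" "openin SY V" by blast
    show ?case
    proof (intro ballI impI)
      fix f g assume f: "f \<in> s" and g: "g \<in> cmaps SX SY" and fg: "f \<le> g"
      have fH: "{x \<in> topspace SX. f x \<in> V} \<in> H" using f s unfolding isbell_subbasic_def by blast
      have op: "openin SX {x \<in> topspace SX. g x \<in> V}"
        using s(3) g openin_continuous_map_preimage unfolding cmaps_eq by blast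
      have sub: "{x \<in> topspace SX. f x \<in> V} \<subseteq> {x \<in> topspace SX. g x \<in> V}"
        using fg s(3) unfolding openin_scott_nat le_fun_def by blast
      have "{x \<in> topspace SX. g x \<in> V} \<in> H"
        using s(2) fH op sub unfolding scott_open_OX_def by blast
      then show "g \<in> s" using g s(1) unfolding isbell_subbasic_def by blast
    qed
  qed
qed

definition Kn :: "nat \<Rightarrow> (bool \<Rightarrow> nat) set" where
  "Kn n = {f \<in> cmaps SX SY. n \<le> f True}"

definition Wop :: "(bool \<Rightarrow> nat) set" where
  "Wop = {f \<in> cmaps SX SY. 1 \<le> f False}"

lemma open_atLeast: "openin SY {n..}"
  unfolding openin_scott_nat by auto

lemma basis_open:
  assumes "scott_open_OX SX H" "openin SY V"
  shows "openin (isbell_topology SX SY) (isbell_subbasic SX SY H V)"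
  unfolding isbell_topology_def openin_topology_generated_by_iff
  by (rule generate_topology_on.Basis) (use assms in blast)

lemma Kn_open: "openin (isbell_topology SX SY) (Kn n)"
proof -
  have "Kn n = isbell_subbasic SX SY (Hb True) {n..}"
    unfolding subbasic_Hb[OF open_atLeast] Kn_def by auto
  then show ?thesis using basis_open Hb_scott open_atLeast by metis
qed

lemma Wop_open: "openin (isbell_topology SX SY) Wop"
proof -
  have "Wop = isbell_subbasic SX SY (Hb False) {1..}"
    unfolding subbasic_Hb[OF open_atLeast] Wop_def by auto
  then show ?thesis using basis_open Hb_scott open_atLeast by metis
qed

lemma topspace_isbell: "topspace (isbell_topology SX SY) = cmaps SX SY"
proof
  show "topspace (isbell_topology SX SY) \<subseteq> cmaps SX SY"
    unfolding isbell_topology_def topology_generated_by_topspace isbell_subbasic_def by blast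
  have "cmaps SX SY = Kn 0" unfolding Kn_def by auto
  then show "cmaps SX SY \<subseteq> topspace (isbell_topology SX SY)"
    using Kn_open openin_subset by metis
qed

definition pn :: "nat \<Rightarrow> bool \<Rightarrow> nat" where
  "pn n = (\<lambda>b. if b then n else 0)"

lemma pn_cmaps: "pn n \<in> cmaps SX SY"
proof -
  have "continuous_map SX SY (pn n)"
    unfolding continuous_map_def topspace_scott
  proof (intro conjI allI impI)
    fix U assume "openin SY U"
    then have up: "\<forall>x\<in>U. \<forall>y. x \<le> y \<longrightarrow> y \<in> U" using openin_scott_nat by blast
    have "scott_open {x \<in> UNIV. pn n x \<in> U}"
      unfolding scott_open_def
    proof (intro conjI allI impI ballI)
      fix x y assume "x \<in> {x \<in> UNIV. pn n x \<in> U}" "x \<le> y"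
      then show "y \<in> {x \<in> UNIV. pn n x \<in> U}" using up unfolding pn_def
        by (cases x; cases y; auto)
    next
      fix D s assume d: "directed_set D \<and> is_lub D s \<and> s \<in> {x \<in> UNIV. pn n x \<in> U}"
      have "D \<noteq> {}" using d unfolding directed_set_def by blast
      moreover have "finite D" by simp
      ultimately have "s \<in> D" using lub_mem_lin d by blast
      then show "D \<inter> {x \<in> UNIV. pn n x \<in> U} \<noteq> {}" using d by blast
    qed
    then show "openin SX {x \<in> UNIV. pn n x \<in> U}" unfolding openin_scott .
  qed auto
  then show ?thesis unfolding cmaps_eq by simp
qed

lemma Kn_in_K: "Kn n \<in> Kset (isbell_topology SX SY)"
proof -
  have p: "pn n \<in> Kn n" using pn_cmaps unfolding Kn_def pn_def by simp
  have sub: "Kn n \<subseteq> topspace (isbell_topology SX SY)" unfolding topspace_isbell Kn_def by blast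
  have ple: "\<And>f. f \<in> Kn n \<Longrightarrow> pn n \<le> f"
    unfolding Kn_def pn_def le_fun_def by auto
  have cpt: "compactin (isbell_topology SX SY) (Kn n)"
    unfolding compactin_def
  proof (intro conjI allI impI)
    show "Kn n \<subseteq> topspace (isbell_topology SX SY)" by (rule sub)
    fix \<U> assume u: "Ball \<U> (openin (isbell_topology SX SY)) \<and> Kn n \<subseteq> \<Union>\<U>"
    then obtain V where V: "V \<in> \<U>" "pn n \<in> V" using p by blast
    have "Kn n \<subseteq> V" using isbell_open_up[of V] u V ple unfolding Kn_def by blast
    then show "\<exists>\<F>. finite \<F> \<and> \<F> \<subseteq> \<U> \<and> Kn n \<subseteq> \<Union>\<F>"
      using V by (intro exI[of _ "{V}"]) auto
  qed
  have sat: "saturated_in (isbell_topology SX SY) (Kn n)"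
    unfolding saturated_in_def
  proof (intro conjI ballI allI impI)
    show "Kn n \<subseteq> topspace (isbell_topology SX SY)" by (rule sub)
    fix x y assume x: "x \<in> Kn n" and s: "spec_le (isbell_topology SX SY) x y"
    then show "y \<in> Kn n" using Kn_open unfolding spec_le_def in_closure_of by blast
  qed
  show ?thesis unfolding Kset_def using p cpt sat by blast
qed

lemma not_wwf: "\<not> weak_well_filtered (isbell_topology SX SY)"
  and not_sstar: "\<not> S_star_well_filtered (isbell_topology SX SY)"
proof -
  have filt: "filtered_K (isbell_topology SX SY) (range Kn)"
    unfolding filtered_K_def
  proof (intro conjI ballI)
    show "range Kn \<subseteq> Kset (isbell_topology SX SY)" using Kn_in_K by blast
    fix K1 K2 assume "K1 \<in> range Kn" "K2 \<in> range Kn"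
    then obtain a b where "K1 = Kn a" "K2 = Kn b" by blast
    moreover have "Kn (max a b) \<subseteq> Kn a \<and> Kn (max a b) \<subseteq> Kn b" unfolding Kn_def by auto
    ultimately show "\<exists>K3\<in>range Kn. K3 \<subseteq> K1 \<and> K3 \<subseteq> K2" by blast
  qed simp
  have int: "\<Inter>(range Kn) = {}"
  proof -
    have "\<And>f. f \<notin> Kn (Suc (f True))" unfolding Kn_def by simp
    then show ?thesis by blast
  qed
  have Wne: "Wop \<noteq> {}"
  proof -
    have "continuous_map SX SY (\<lambda>b. 1::nat)" by (simp add: topspace_scott)
    then have "(\<lambda>b. 1::nat) \<in> Wop" unfolding cmaps_eq Wop_def by simp
    then show ?thesis by blast
  qed
  have notsub: "\<And>n. \<not> Kn n \<subseteq> Wop"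
  proof -
    fix n have "pn n \<in> Kn n" using pn_cmaps unfolding Kn_def pn_def by simp
    moreover have "pn n \<notin> Wop" unfolding Wop_def pn_def by simp
    ultimately show "\<not> Kn n \<subseteq> Wop" by blast
  qed
  show "\<not> weak_well_filtered (isbell_topology SX SY)"
    unfolding weak_well_filtered_def
    using filt Wop_open Wne int notsub by blast
  have K0: "Kn 0 = cmaps SX SY" unfolding Kn_def by auto
  have "\<And>n. Kn n \<inter> Kn 0 = Kn n" using K0 unfolding Kn_def by auto
  then have "\<not> (\<exists>K\<in>range Kn. K \<inter> Kn 0 \<subseteq> Wop)" using notsub by auto
  moreover have "\<Inter>(range Kn) \<inter> Kn 0 \<subseteq> Wop" using int by simp
  ultimately show "\<not> S_star_well_filtered (isbell_topology SX SY)"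
    unfolding S_star_well_filtered_def
    using filt Wop_open Wne Kn_in_K[of 0] by blast
qed

theorem mainTheorem19:
  shows "S_star_well_filtered (scott_topology :: nat topology)
       \<and> \<not> weak_well_filtered (isbell_topology (scott_topology :: bool topology) (scott_topology :: nat topology))
       \<and> \<not> S_star_well_filtered (isbell_topology (scott_topology :: bool topology) (scott_topology :: nat topology))"
  using nat_S_star not_wwf not_sstar by blast

end
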